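(* Let $S$ be a semigroup and $a\in S$ an idempotent with $aSa\subseteq\operatorname{Reg}(S)$. Put $P=\{x\in Sa: x\,\mathscr L\,ax\}$ and $\phi:P\to aSa$, $x\mapsto ax$. Then $$\operatorname{MI}(Sa)=\operatorname{RI}(Sa)=\operatorname{MI}(P)=\operatorname{RI}(P)=V_P(a)=V(a)\cap P=V(a)\cap Sa=V(a)a=E(\widehat H^a_a)=a\phi^{-1}.$$
   Context: For a semigroup $T$: $\operatorname{RI}(T)$ is the set of right identities ($u$ with $xu=x$ for all $x\in T$); $\operatorname{MI}(T)$ is the set of mid-identities ($u$ with $xy=xuy$ for all $x,y\in T$); $E(T)$ is the set of idempotents. $V(a)=\{y\in S: a=aya,\ y=yay\}$ and $V_P(a)=\{y\in P: a=aya,\ y=yay\}$. $\widehat H^a_a=\{x\in P: ax \text{ is } \mathscr H\text{-related to } a \text{ in the monoid } aSa\}$. $\mathscr L$ is Green's relation on $S$. *)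

theory Defs
  imports Main
begin

text \<open>The semigroup S is the whole of a type of class semigroup_mult.
  Subsemigroups T are represented as subsets of that type.\<close>

definition right_ids :: "'a::semigroup_mult set \<Rightarrow> 'a set" ("RI") where
  "RI T = {u \<in> T. \<forall>x\<in>T. x * u = x}"

definition mid_ids :: "'a::semigroup_mult set \<Rightarrow> 'a set" ("MI") where
  "MI T = {u \<in> T. \<forall>x\<in>T. \<forall>y\<in>T. x * y = x * u * y}"

definition idems :: "'a::semigroup_mult set \<Rightarrow> 'a set" ("E") where
  "E T = {u \<in> T. u * u = u}"

definition Reg :: "'a::semigroup_mult set" where
  "Reg = {x. \<exists>y. x = x * y * x}"

text \<open>Green's L, R, H relations computed inside a subsemigroup M (via M^1).\<close>
definition greenL_in :: "'a::semigroup_mult set \<Rightarrow> 'a \<Rightarrow> 'a \<Rightarrow> bool" where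
  "greenL_in M x y \<longleftrightarrow> (x = y \<or> (\<exists>s\<in>M. x = s * y)) \<and> (y = x \<or> (\<exists>t\<in>M. y = t * x))"

definition greenR_in :: "'a::semigroup_mult set \<Rightarrow> 'a \<Rightarrow> 'a \<Rightarrow> bool" where
  "greenR_in M x y \<longleftrightarrow> (x = y \<or> (\<exists>s\<in>M. x = y * s)) \<and> (y = x \<or> (\<exists>t\<in>M. y = x * t))"

definition greenH_in :: "'a::semigroup_mult set \<Rightarrow> 'a \<Rightarrow> 'a \<Rightarrow> bool" where
  "greenH_in M x y \<longleftrightarrow> greenL_in M x y \<and> greenR_in M x y"

definition greenL :: "'a::semigroup_mult \<Rightarrow> 'a \<Rightarrow> bool" where
  "greenL x y \<longleftrightarrow> greenL_in UNIV x y"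

definition Sa :: "'a::semigroup_mult \<Rightarrow> 'a set" where
  "Sa a = {s * a | s. True}"

definition aSa :: "'a::semigroup_mult \<Rightarrow> 'a set" where
  "aSa a = {a * s * a | s. True}"

definition Pset :: "'a::semigroup_mult \<Rightarrow> 'a set" where
  "Pset a = {x \<in> Sa a. greenL x (a * x)}"

definition inv_set :: "'a::semigroup_mult \<Rightarrow> 'a set" ("V") where
  "V a = {y. a = a * y * a \<and> y = y * a * y}"

definition inv_set_P :: "'a::semigroup_mult \<Rightarrow> 'a set" ("V\<^sub>P") where
  "V\<^sub>P a = {y \<in> Pset a. a = a * y * a \<and> y = y * a * y}"

definition Hhat :: "'a::semigroup_mult \<Rightarrow> 'a set" where
  "Hhat a = {x \<in> Pset a. greenH_in (aSa a) (a * x) a}"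

definition phi :: "'a::semigroup_mult \<Rightarrow> 'a \<Rightarrow> 'a" where
  "phi a x = a * x"

end

theory Submission
  imports Defs
begin

lemma Sa_iff:
  fixes a :: "'a::semigroup_mult"
  assumes "a * a = a"
  shows "x \<in> Sa a \<longleftrightarrow> x * a = x"
proof
  assume "x \<in> Sa a"
  then obtain s where "x = s * a" by (auto simp: Sa_def)
  then show "x * a = x" using assms by (simp add: mult.assoc)
next
  assume "x * a = x" then show "x \<in> Sa a" unfolding Sa_def by (metis (mono_tags, lifting) mem_Collect_eq)
qed

lemma a_in_P:
  fixes a :: "'a::semigroup_mult"
  assumes "a * a = a"
  shows "a \<in> Pset a"
  using assms by (simp add: Pset_def Sa_iff greenL_def greenL_in_def)

lemma B_sub_P:
  fixes a :: "'a::semigroup_mult"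
  assumes "a * a = a" "x * a = x" "a * x = a"
  shows "x \<in> Pset a"
proof -
  have "x \<in> Sa a" using assms Sa_iff by blast
  moreover have "greenL x (a * x)"
    unfolding greenL_def greenL_in_def using assms by (metis UNIV_I)
  ultimately show ?thesis by (simp add: Pset_def)
qed

lemma P_sub_Sa: "x \<in> Pset a \<Longrightarrow> x \<in> Sa a"
  by (simp add: Pset_def)

theorem proposition3p23:
  fixes a :: "'a::semigroup_mult"
  assumes "a * a = a"
    and "aSa a \<subseteq> Reg"
  shows "MI (Sa a) = RI (Sa a)
       \<and> RI (Sa a) = MI (Pset a)
       \<and> MI (Pset a) = RI (Pset a)
       \<and> RI (Pset a) = V\<^sub>P a
       \<and> V\<^sub>P a = V a \<inter> Pset a
       \<and> V a \<inter> Pset a = V a \<inter> Sa a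
       \<and> V a \<inter> Sa a = (\<lambda>y. y * a) ` V a
       \<and> (\<lambda>y. y * a) ` V a = E (Hhat a)
       \<and> E (Hhat a) = {x \<in> Pset a. phi a x = a}"
proof -
  note aa = assms(1)
  define B where "B = {x. x * a = x \<and> a * x = a}"
  have SaI: "\<And>x. x \<in> Sa a \<longleftrightarrow> x * a = x" using Sa_iff[OF aa] .
  have aSa: "a \<in> Sa a" using SaI aa by simp
  have aP: "a \<in> Pset a" using a_in_P[OF aa] .
  have BP: "\<And>x. x \<in> B \<Longrightarrow> x \<in> Pset a" using B_sub_P[OF aa] by (auto simp: B_def)
  have Bright: "\<And>u x. u \<in> B \<Longrightarrow> x * a = x \<Longrightarrow> x * u = x"
  proof -
    fix u x assume u: "u \<in> B" and x: "x * a = x"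
    have "x * u = (x * a) * u" using x by simp
    also have "\<dots> = x * (a * u)" by (simp add: mult.assoc)
    also have "\<dots> = x * a" using u by (simp add: B_def)
    finally show "x * u = x" using x by simp
  qed
  have PSa: "\<And>x. x \<in> Pset a \<Longrightarrow> x * a = x" using P_sub_Sa SaI by blast
  have e1: "MI (Sa a) = B"
  proof
    show "MI (Sa a) \<subseteq> B"
    proof
      fix u assume u: "u \<in> MI (Sa a)"
      then have uS: "u \<in> Sa a" and m: "\<forall>x\<in>Sa a. \<forall>y\<in>Sa a. x * y = x * u * y"
        unfolding mid_ids_def by blast+
      have ua: "u * a = u" using uS SaI by blast
      have "a * a = a * u * a" using m aSa by blast
      then have "a * u = a" using aa ua by (simp add: mult.assoc)
      then show "u \<in> B" using ua by (simp add: B_def)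
    qed
    show "B \<subseteq> MI (Sa a)"
    proof
      fix u assume u: "u \<in> B"
      have "u * a = u" using u by (simp add: B_def)
      then have "u \<in> Sa a" using SaI by blast
      moreover have "\<forall>x\<in>Sa a. \<forall>y\<in>Sa a. x * y = x * u * y"
      proof (intro ballI)
        fix x y assume "x \<in> Sa a" "y \<in> Sa a"
        then have "x * a = x" using SaI by blast
        then have "x * u = x" using Bright u by blast
        then show "x * y = x * u * y" by simp
      qed
      ultimately show "u \<in> MI (Sa a)" unfolding mid_ids_def by blast
    qed
  qed
  have e2: "RI (Sa a) = B"
  proof
    show "RI (Sa a) \<subseteq> B"
    proof
      fix u assume "u \<in> RI (Sa a)"
      then have "u \<in> Sa a" "a * u = a" using aSa unfolding right_ids_def by blast+
      then show "u \<in> B" using SaI unfolding B_def by blast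
    qed
    show "B \<subseteq> RI (Sa a)"
    proof
      fix u assume u: "u \<in> B"
      then have "u \<in> Sa a" using SaI unfolding B_def by blast
      moreover have "\<forall>x\<in>Sa a. x * u = x" using Bright u SaI by blast
      ultimately show "u \<in> RI (Sa a)" unfolding right_ids_def by blast
    qed
  qed
  have e3: "MI (Pset a) = B"
  proof
    show "MI (Pset a) \<subseteq> B"
    proof
      fix u assume u: "u \<in> MI (Pset a)"
      then have uS: "u \<in> Pset a" and m: "\<forall>x\<in>Pset a. \<forall>y\<in>Pset a. x * y = x * u * y"
        unfolding mid_ids_def by blast+
      have ua: "u * a = u" using uS PSa by blast
      have "a * a = a * u * a" using m aP by blast
      then have "a * u = a" using aa ua by (simp add: mult.assoc)
      then show "u \<in> B" using ua by (simp add: B_def)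
    qed
    show "B \<subseteq> MI (Pset a)"
    proof
      fix u assume u: "u \<in> B"
      have "\<forall>x\<in>Pset a. \<forall>y\<in>Pset a. x * y = x * u * y"
      proof (intro ballI)
        fix x y assume "x \<in> Pset a" "y \<in> Pset a"
        then have "x * a = x" using PSa by blast
        then have "x * u = x" using Bright u by blast
        then show "x * y = x * u * y" by simp
      qed
      then show "u \<in> MI (Pset a)" using BP u unfolding mid_ids_def by blast
    qed
  qed
  have e4: "RI (Pset a) = B"
  proof
    show "RI (Pset a) \<subseteq> B"
    proof
      fix u assume "u \<in> RI (Pset a)"
      then have "u \<in> Pset a" "a * u = a" using aP unfolding right_ids_def by blast+
      then show "u \<in> B" using PSa unfolding B_def by blast
    qed
    show "B \<subseteq> RI (Pset a)"
    proof
      fix u assume u: "u \<in> B"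
      have "\<forall>x\<in>Pset a. x * u = x" using Bright u PSa by blast
      then show "u \<in> RI (Pset a)" using BP u unfolding right_ids_def by blast
    qed
  qed
  have e5: "V a \<inter> Sa a = B"
  proof
    show "V a \<inter> Sa a \<subseteq> B"
    proof
      fix y assume "y \<in> V a \<inter> Sa a"
      then have "a = a * y * a" "y * a = y" using SaI by (auto simp: inv_set_def)
      then show "y \<in> B" by (simp add: B_def mult.assoc)
    qed
    show "B \<subseteq> V a \<inter> Sa a"
      using SaI by (auto simp: B_def inv_set_def aa mult.assoc)
  qed
  have e6: "V a \<inter> Pset a = B" using e5 BP P_sub_Sa by blast
  have e7: "V\<^sub>P a = B" using e6 by (auto simp: inv_set_P_def inv_set_def)
  have e8: "(\<lambda>y. y * a) ` V a = B"
  proof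
    show "(\<lambda>y. y * a) ` V a \<subseteq> B"
      by (auto simp: B_def inv_set_def aa mult.assoc)
    show "B \<subseteq> (\<lambda>y. y * a) ` V a"
    proof
      fix x assume "x \<in> B"
      then have "x \<in> V a" "x = x * a" using e5 by (auto simp: B_def)
      then show "x \<in> (\<lambda>y. y * a) ` V a" by blast
    qed
  qed
  have e9: "E (Hhat a) = B"
  proof
    show "E (Hhat a) \<subseteq> B"
    proof
      fix x assume x: "x \<in> E (Hhat a)"
      then have xP: "x \<in> Pset a" and xx: "x * x = x" and H: "greenH_in (aSa a) (a * x) a"
        by (auto simp: idems_def Hhat_def)
      from H have "a = a * x \<or> (\<exists>t\<in>aSa a. a = t * (a * x))"
        by (auto simp: greenH_in_def greenL_in_def)
      then have "a * x = a"
      proof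
        assume "\<exists>t\<in>aSa a. a = t * (a * x)"
        then obtain t where t: "a = t * (a * x)" by blast
        have "a * x = t * (a * x) * x" using t by simp
        also have "\<dots> = t * (a * (x * x))" by (simp add: mult.assoc)
        also have "\<dots> = a" using xx t by simp
        finally show ?thesis .
      qed simp
      then show "x \<in> B" using PSa xP by (simp add: B_def)
    qed
    show "B \<subseteq> E (Hhat a)"
    proof
      fix x assume x: "x \<in> B"
      then have "x * a = x" by (simp add: B_def)
      then have "x * x = x" using Bright x by blast
      moreover have "greenH_in (aSa a) (a * x) a" using x
        by (simp add: B_def greenH_in_def greenL_in_def greenR_in_def)
      ultimately show "x \<in> E (Hhat a)" using BP x by (simp add: idems_def Hhat_def)
    qed
  qed
  have e10: "{x \<in> Pset a. phi a x = a} = B"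
    using BP PSa by (auto simp: phi_def B_def)
  show ?thesis using e1 e2 e3 e4 e5 e6 e7 e8 e9 e10 by simp
qed

end
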